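(* Let $\mathbf{A}$ be a finite algebra and $B$ a subuniverse of $\mathbf{A}$. There exists a function $f:\mathbb{N}\to\mathbb{N}$ such that for every $N$, if $\mathbf{A}$ has an $f(N)$-ary $B$-essential subpower, then there exist $b_1,b_2\in B$ and $a_1,\dots,a_N\in A$ such that the subuniverse of $\mathbf{A}^N$ generated by the $N$ tuples $(a_1,b_2,b_2,\dots,b_2)$, $(b_1,a_2,b_2,\dots,b_2)$, $(b_1,b_1,a_3,b_2,\dots,b_2)$, $\dots$, $(b_1,\dots,b_1,a_N)$ (the $i$-th tuple has $b_1$ in positions $<i$, $a_i$ in position $i$, and $b_2$ in positions $>i$) is $B$-essential.
   Context: $B$-essential: a subuniverse $R$ of $\mathbf{A}^k$ is $B$-essential if $R\cap B^k=\emptyset$ and for every $i\in\{1,\dots,k\}$, $\pi_{\widehat i}(R)\cap B^{k-1}\neq\emptyset$, where $\pi_{\widehat i}(R)$ is the projection of $R$ onto all coordinates except the $i$-th. A subpower is a subuniverse of a finite power of $\mathbf{A}$. *)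

theory Defs
  imports Main
begin

text \<open>An algebra is given by a universe A :: 'a set and a set F of basic operations,
each a pair (n, f) of an arity n and a function f on argument lists of length n.\<close>

type_synonym 'a ops = "(nat \<times> ('a list \<Rightarrow> 'a)) set"

definition subuniverse :: "'a ops \<Rightarrow> 'a set \<Rightarrow> 'a set \<Rightarrow> bool" where
  "subuniverse F A S \<longleftrightarrow> S \<subseteq> A \<and>
     (\<forall>(n, f) \<in> F. \<forall>xs. length xs = n \<and> set xs \<subseteq> S \<longrightarrow> f xs \<in> S)"

definition algebra :: "'a ops \<Rightarrow> 'a set \<Rightarrow> bool" where
  "algebra F A \<longleftrightarrow> subuniverse F A A"

definition tuples :: "nat \<Rightarrow> 'a set \<Rightarrow> 'a list set" where
  "tuples k A = {xs. length xs = k \<and> set xs \<subseteq> A}"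

definition power_op :: "nat \<Rightarrow> ('a list \<Rightarrow> 'a) \<Rightarrow> 'a list list \<Rightarrow> 'a list" where
  "power_op k f xss = map (\<lambda>i. f (map (\<lambda>xs. xs ! i) xss)) [0..<k]"

definition power_ops :: "nat \<Rightarrow> 'a ops \<Rightarrow> 'a list ops" where
  "power_ops k F = (\<lambda>(n, f). (n, power_op k f)) ` F"

definition subpower :: "'a ops \<Rightarrow> 'a set \<Rightarrow> nat \<Rightarrow> 'a list set \<Rightarrow> bool" where
  "subpower F A k R \<longleftrightarrow> subuniverse (power_ops k F) (tuples k A) R"

definition Sg_power :: "'a ops \<Rightarrow> 'a set \<Rightarrow> nat \<Rightarrow> 'a list set \<Rightarrow> 'a list set" where
  "Sg_power F A k G = \<Inter> {R. subpower F A k R \<and> G \<subseteq> R}"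

definition drop_coord :: "nat \<Rightarrow> 'a list \<Rightarrow> 'a list" where
  "drop_coord i xs = take i xs @ drop (Suc i) xs"

definition B_essential :: "'a set \<Rightarrow> nat \<Rightarrow> 'a list set \<Rightarrow> bool" where
  "B_essential B k R \<longleftrightarrow> R \<inter> tuples k B = {} \<and>
     (\<forall>i<k. drop_coord i ` R \<inter> tuples (k - 1) B \<noteq> {})"

end

theory Submission imports Defs "HOL-Library.Ramsey" begin

lemma subpower_sub: "subpower F A k R \<Longrightarrow> R \<subseteq> tuples k A"
  by (simp add: subpower_def subuniverse_def)

lemma proj_subpower:
  assumes T: "subpower F A k T" and hs: "\<forall>l<N. hs!l < k"
  shows "subpower F A N ((\<lambda>x. map (\<lambda>l. x!(hs!l)) [0..<N]) ` T)"
proof -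
  let ?p = "\<lambda>x. map (\<lambda>l. x!(hs!l)) [0..<N]"
  have TA: "T \<subseteq> tuples k A" using T subpower_sub by blast
  have 1: "?p ` T \<subseteq> tuples N A"
  proof
    fix y assume "y \<in> ?p ` T"
    then obtain x where x: "x \<in> T" "y = ?p x" by blast
    then have "length x = k" "set x \<subseteq> A" using TA by (auto simp: tuples_def)
    then show "y \<in> tuples N A" using x hs by (auto simp: tuples_def)
  qed
  have 2: "power_op N f xss \<in> ?p ` T" if nf: "(n, f) \<in> F" and l: "length xss = n" and s: "set xss \<subseteq> ?p ` T" for n f xss
  proof -
    define yss where "yss = map (\<lambda>x. SOME y. y \<in> T \<and> ?p y = x) xss"
    have yy: "\<forall>x\<in>set xss. (SOME y. y \<in> T \<and> ?p y = x) \<in> T \<and> ?p (SOME y. y \<in> T \<and> ?p y = x) = x"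
    proof
      fix x assume "x \<in> set xss"
      then have "\<exists>y. y \<in> T \<and> ?p y = x" using s by blast
      then show "(SOME y. y \<in> T \<and> ?p y = x) \<in> T \<and> ?p (SOME y. y \<in> T \<and> ?p y = x) = x" by (rule someI_ex)
    qed
    have ys: "set yss \<subseteq> T" using yy by (auto simp: yss_def)
    have mp: "map ?p yss = xss" using yy by (simp add: yss_def map_idI)
    have "(n, power_op k f) \<in> power_ops k F" using nf by (force simp: power_ops_def)
    then have inT: "power_op k f yss \<in> T" using T ys l unfolding subpower_def subuniverse_def
      by (fastforce simp: yss_def)
    have "?p (power_op k f yss) = power_op N f (map ?p yss)"
    proof (rule nth_equalityI)
      show "length (?p (power_op k f yss)) = length (power_op N f (map ?p yss))"
        by (simp add: power_op_def)
      fix l assume "l < length (?p (power_op k f yss))"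
      then have l: "l < N" by simp
      then have hl: "hs ! l < k" using hs by blast
      have "?p (power_op k f yss) ! l = power_op k f yss ! (hs ! l)" using l by simp
      also have "\<dots> = f (map (\<lambda>xs. xs ! (hs ! l)) yss)" using hl by (simp add: power_op_def)
      also have "map (\<lambda>xs. xs ! (hs ! l)) yss = map (\<lambda>xs. xs ! l) (map ?p yss)"
        using l by simp
      also have "f \<dots> = power_op N f (map ?p yss) ! l" using l by (simp add: power_op_def)
      finally show "?p (power_op k f yss) ! l = power_op N f (map ?p yss) ! l" .
    qed
    then have "power_op N f xss = ?p (power_op k f yss)" using mp by simp
    then show ?thesis using inT by (rule image_eqI)
  qed
  show ?thesis using 1 2 unfolding subpower_def subuniverse_def power_ops_def by fastforce
qed

lemma Q_subpower:
  assumes A: "algebra F A" and B: "subuniverse F A B"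
  shows "subpower F A k {x \<in> tuples k A. \<forall>j<k. j \<notin> J \<longrightarrow> x!j \<in> B}"
proof -
  have 2: "power_op k f xss \<in> {x \<in> tuples k A. \<forall>j<k. j \<notin> J \<longrightarrow> x!j \<in> B}"
    if nf: "(n, f) \<in> F" and l: "length xss = n" and s: "set xss \<subseteq> {x \<in> tuples k A. \<forall>j<k. j \<notin> J \<longrightarrow> x!j \<in> B}" for n f xss
  proof -
    have a: "f (map (\<lambda>xs. xs ! i) xss) \<in> A" if "i < k" for i
    proof -
      have "set (map (\<lambda>xs. xs ! i) xss) \<subseteq> A"
      proof
        fix z assume "z \<in> set (map (\<lambda>xs. xs ! i) xss)"
        then obtain xs where "xs \<in> set xss" "z = xs ! i" by auto
        then have "length xs = k" "set xs \<subseteq> A" using s by (auto simp: tuples_def)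
        then show "z \<in> A" using \<open>z = xs ! i\<close> that nth_mem by blast
      qed
      then show ?thesis using A nf l unfolding algebra_def subuniverse_def by fastforce
    qed
    have b: "f (map (\<lambda>xs. xs ! i) xss) \<in> B" if "i < k" "i \<notin> J" for i
    proof -
      have "set (map (\<lambda>xs. xs ! i) xss) \<subseteq> B" using s that by (auto simp: tuples_def)
      then show ?thesis using B nf l unfolding subuniverse_def by fastforce
    qed
    show ?thesis using a b by (auto simp: power_op_def tuples_def)
  qed
  show ?thesis using 2 unfolding subpower_def subuniverse_def power_ops_def by fastforce
qed

lemma Int_subpower: "subpower F A k R \<Longrightarrow> subpower F A k Q \<Longrightarrow> subpower F A k (R \<inter> Q)"
  unfolding subpower_def subuniverse_def by blast

lemma Sg_least: "subpower F A N T \<Longrightarrow> G \<subseteq> T \<Longrightarrow> Sg_power F A N G \<subseteq> T"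
  unfolding Sg_power_def by blast

lemma Sg_gen: "G \<subseteq> Sg_power F A N G"
  unfolding Sg_power_def by blast

lemma drop_coord_map: "i < N \<Longrightarrow> drop_coord i (map g [0..<N]) = map g ([0..<i] @ [Suc i..<N])"
  by (simp add: drop_coord_def take_map drop_map)


theorem lemma3p2:
  fixes F :: "'a ops" and A B :: "'a set"
  assumes "algebra F A" and "finite A" and "subuniverse F A B"
  shows "\<exists>f :: nat \<Rightarrow> nat. \<forall>N \<ge> 1.
           (\<exists>R. subpower F A (f N) R \<and> B_essential B (f N) R) \<longrightarrow>
           (\<exists>b1 \<in> B. \<exists>b2 \<in> B. \<exists>a :: nat \<Rightarrow> 'a. (\<forall>j<N. a j \<in> A) \<and>
              B_essential B N
                (Sg_power F A N
                  ((\<lambda>i. map (\<lambda>j. if j < i then b1 else if j = i then a j else b2) [0..<N])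
                     ` {0..<N})))"
proof -
  have BA: "B \<subseteq> A" using assms(3) by (simp add: subuniverse_def)
  have "finite (B \<times> B)" using assms(2) BA finite_subset by blast
  then obtain xs where xs: "set xs = B \<times> B" using finite_list by blast
  define C where "C = length xs"
  have "\<forall>N. \<exists>M::nat. partn_lst {..<M} (replicate C N) 2" using ramsey_full by blast
  then obtain M :: "nat \<Rightarrow> nat" where M: "\<And>N. partn_lst {..<M N} (replicate C N) 2" by metis
  show ?thesis
  proof (rule exI[of _ "\<lambda>N. max 2 (M N)"], intro allI impI)
    fix N :: nat assume N: "N \<ge> 1"
      and ex: "\<exists>R. subpower F A (max 2 (M N)) R \<and> B_essential B (max 2 (M N)) R"
    define k where "k = max 2 (M N)"
    obtain R where R: "subpower F A k R" "B_essential B k R" using ex k_def by blast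
    have RA: "R \<subseteq> tuples k A" using R(1) subpower_sub by blast
    have RB: "R \<inter> tuples k B = {}" using R(2) by (simp add: B_essential_def)
    have "\<forall>i<k. \<exists>x. x \<in> R \<and> drop_coord i x \<in> tuples (k-1) B"
      using R(2) unfolding B_essential_def by blast
    then obtain r where r: "\<And>i. i<k \<Longrightarrow> r i \<in> R \<and> drop_coord i (r i) \<in> tuples (k-1) B" by metis
    have rlen: "i < k \<Longrightarrow> length (r i) = k" for i using r RA by (auto simp: tuples_def)
    have rA: "i < k \<Longrightarrow> set (r i) \<subseteq> A" for i using r RA unfolding tuples_def by blast
    have rB: "r i ! j \<in> B" if ij: "i<k" "j<k" "j\<noteq>i" for i j
    proof -
      have d: "set (drop_coord i (r i)) \<subseteq> B" "length (drop_coord i (r i)) = k - 1"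
        using r[OF ij(1)] by (auto simp: tuples_def)
      show ?thesis
      proof (cases "j < i")
        case True
        then have "drop_coord i (r i) ! j = r i ! j"
          using rlen[OF ij(1)] ij by (simp add: drop_coord_def nth_append)
        moreover have "j < length (drop_coord i (r i))" using d True ij by simp
        ultimately show ?thesis using d nth_mem by (metis subsetD)
      next
        case False
        then have ij2: "i < j" "\<not> j - 1 < i" using ij by auto
        then have "drop_coord i (r i) ! (j - 1) = r i ! j"
          using rlen[OF ij(1)] ij by (simp add: drop_coord_def nth_append)
        moreover have "j - 1 < length (drop_coord i (r i))" using d False ij by simp
        ultimately show ?thesis using d nth_mem by (metis subsetD)
      qed
    qed
    have "k \<ge> 2" by (simp add: k_def)
    then have "r 0 ! 1 \<in> B" using rB by simp
    then have "C > 0" using xs by (auto simp: C_def)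
    define pr where "pr H = (r (Max H) ! Min H, r (Min H) ! Max H)" for H :: "nat set"
    define col where "col H = (LEAST i. xs ! i = pr H)" for H
    have colp: "col H < C \<and> xs ! col H = pr H" if H: "H \<in> nsets {..<k} 2" for H
    proof -
      obtain x y where xy: "H = {x,y}" "x \<noteq> y" "x < k" "y < k" using H
        by (auto simp: nsets_def card_2_iff)
      have "Min H \<in> H" "Max H \<in> H" "Min H \<noteq> Max H" using xy by auto
      then have "pr H \<in> set xs" using xy rB xs by (auto simp: pr_def)
      then obtain i where i: "i < C" "xs ! i = pr H" by (auto simp: C_def in_set_conv_nth)
      have "xs ! col H = pr H" unfolding col_def by (rule LeastI[of "\<lambda>i. xs ! i = pr H" i]) (rule i(2))
      moreover have "col H \<le> i" unfolding col_def by (rule Least_le) (rule i(2))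
      ultimately show ?thesis using i by simp
    qed
    have colf: "col \<in> nsets {..<k} 2 \<rightarrow> {..<length (replicate C N)}" using colp by auto
    have "partn_lst {..<k} (replicate C N) 2"
      using partn_lst_greater_resource[OF M] by (simp add: k_def)
    then obtain i H where iH: "i < length (replicate C N)" "H \<in> nsets {..<k} (replicate C N ! i)"
        "col ` nsets H 2 \<subseteq> {i}"
      using partn_lstE[OF _ colf] by blast
    have iC: "i < C" using iH by simp
    have H: "H \<subseteq> {..<k}" "finite H" "card H = N" using iH iC by (auto simp: nsets_def)
    obtain c d where cd: "xs ! i = (c, d)" by fastforce
    have cdB: "c \<in> B" "d \<in> B" using iC cd xs nth_mem[of i xs] by (auto simp: C_def)
    have hom: "r y ! x = c \<and> r x ! y = d" if "x \<in> H" "y \<in> H" "x < y" for x y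
    proof -
      have "{x,y} \<in> nsets H 2" using that by (auto simp: nsets_def)
      then have "col {x,y} = i" using iH(3) by blast
      moreover have "{x,y} \<in> nsets {..<k} 2" using that H by (auto simp: nsets_def)
      ultimately have "xs ! i = pr {x,y}" using colp by metis
      then show ?thesis using that cd by (auto simp: pr_def)
    qed
    define hs where "hs = sorted_list_of_set H"
    have hsl: "length hs = N" "set hs = H" using H by (auto simp: hs_def)
    have hss: "sorted_wrt (<) hs" by (simp add: hs_def)
    have hslt: "l < m \<Longrightarrow> m < N \<Longrightarrow> hs ! l < hs ! m" for l m
      using hss hsl sorted_wrt_nth_less by blast
    have hsH: "l < N \<Longrightarrow> hs ! l \<in> H" for l using hsl nth_mem by metis
    have hsk: "\<forall>l<N. hs ! l < k" using hsH H by blast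
    define proj where "proj x = map (\<lambda>l. x ! (hs ! l)) [0..<N]" for x :: "'a list"
    define a where "a j = r (hs ! j) ! (hs ! j)" for j
    define gen where "gen m = map (\<lambda>j. if j < m then c else if j = m then a j else d) [0..<N]" for m
    have gen_eq: "gen m = proj (r (hs ! m))" if m: "m < N" for m
    proof (rule nth_equalityI)
      show "length (gen m) = length (proj (r (hs ! m)))" by (simp add: gen_def proj_def)
      fix j assume "j < length (gen m)"
      then have j: "j < N" by (simp add: gen_def)
      show "gen m ! j = proj (r (hs ! m)) ! j"
      proof (cases "j < m")
        case True then show ?thesis using hom[OF hsH[OF j] hsH[OF m] hslt[OF True m]] j
          by (simp add: gen_def proj_def)
      next
        case False
        show ?thesis
        proof (cases "j = m")
          case True then show ?thesis using j by (simp add: gen_def proj_def a_def)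
        next
          case False2: False
          then have "m < j" using False by simp
          then show ?thesis using hom[OF hsH[OF m] hsH[OF j] hslt[OF \<open>m < j\<close> j]] j False False2
            by (simp add: gen_def proj_def)
        qed
      qed
    qed
    define Q where "Q = {x \<in> tuples k A. \<forall>j<k. j \<notin> H \<longrightarrow> x!j \<in> B}"
    have Qs: "subpower F A k Q" unfolding Q_def using Q_subpower[OF assms(1,3)] by blast
    define T where "T = proj ` (R \<inter> Q)"
    have Ts: "subpower F A N T" unfolding T_def proj_def
      by (rule proj_subpower[OF Int_subpower[OF R(1) Qs] hsk])
    have rQ: "r (hs ! m) \<in> R \<inter> Q" if m: "m < N" for m
    proof -
      have mk: "hs ! m < k" using hsk m by blast
      have "r (hs ! m) \<in> tuples k A" using r[OF mk] RA by blast
      moreover have "\<forall>j<k. j \<notin> H \<longrightarrow> r (hs ! m) ! j \<in> B" using rB mk hsH m by metis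
      ultimately show ?thesis using r[OF mk] by (simp add: Q_def)
    qed
    have GT: "gen ` {0..<N} \<subseteq> T" using gen_eq rQ by (auto simp: T_def)
    have SgT: "Sg_power F A N (gen ` {0..<N}) \<subseteq> T" by (rule Sg_least[OF Ts GT])
    have aA: "\<forall>j<N. a j \<in> A"
    proof (intro allI impI)
      fix j assume j: "j < N"
      then have jk: "hs ! j < k" using hsk by blast
      then have "r (hs ! j) ! (hs ! j) \<in> set (r (hs ! j))" using rlen[OF jk] by simp
      then show "a j \<in> A" using rA[OF jk] unfolding a_def by blast
    qed
    have ess: "B_essential B N (Sg_power F A N (gen ` {0..<N}))"
      unfolding B_essential_def
    proof (intro conjI allI impI)
      show "Sg_power F A N (gen ` {0..<N}) \<inter> tuples N B = {}"
      proof (rule ccontr)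
        assume "Sg_power F A N (gen ` {0..<N}) \<inter> tuples N B \<noteq> {}"
        then obtain s where s: "s \<in> T" "s \<in> tuples N B" using SgT by blast
        then obtain x where x: "x \<in> R" "x \<in> Q" "s = proj x" by (auto simp: T_def)
        have "x \<in> tuples k B"
        proof -
          have lx: "length x = k" using x Q_def by (simp add: tuples_def)
          have "x ! j \<in> B" if j: "j < k" for j
          proof (cases "j \<in> H")
            case True
            then obtain l where l: "l < N" "hs ! l = j" using hsl by (metis in_set_conv_nth)
            then have "s ! l = x ! j" using x by (simp add: proj_def)
            moreover have "s ! l \<in> B" using s l by (auto simp: tuples_def)
            ultimately show ?thesis by simp
          next
            case False then show ?thesis using x j by (simp add: Q_def)
          qed
          then show ?thesis using lx by (auto simp: tuples_def in_set_conv_nth)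
        qed
        then show False using RB x by blast
      qed
    next
      fix m assume m: "m < N"
      have "gen m \<in> Sg_power F A N (gen ` {0..<N})" using Sg_gen m by fastforce
      moreover have "drop_coord m (gen m) \<in> tuples (N - 1) B"
        using m cdB by (auto simp: gen_def drop_coord_map tuples_def)
      ultimately show "drop_coord m ` Sg_power F A N (gen ` {0..<N}) \<inter> tuples (N - 1) B \<noteq> {}"
        by blast
    qed
    have ess': "B_essential B N (Sg_power F A N ((\<lambda>i. map (\<lambda>j. if j < i then c else if j = i then a j else d) [0..<N]) ` {0..<N}))"
      using ess unfolding gen_def .
    show "\<exists>b1 \<in> B. \<exists>b2 \<in> B. \<exists>a :: nat \<Rightarrow> 'a. (\<forall>j<N. a j \<in> A) \<and>
              B_essential B N
                (Sg_power F A N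
                  ((\<lambda>i. map (\<lambda>j. if j < i then b1 else if j = i then a j else b2) [0..<N])
                     ` {0..<N}))"
      apply (rule bexI[OF _ cdB(1)], rule bexI[OF _ cdB(2)], rule exI[of _ a])
      using aA ess' by (intro conjI)
  qed
qed

end
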